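(* Under the covariate-shift assumptions of the context, let $V$ be a fixed score function and $\alpha\in(0,1)$. Let $\tilde\alpha=A(Z_1,\ldots,Z_n,X_{n+1})\in[0,1]$, where $A$ is a fixed deterministic rule (invariant under permutations of its first $n$ arguments) such that for every input, with $\bar v^*:=Q(\tilde\alpha;\hat{\mathcal F})$, $v^*_{i1}:=Q(\tilde\alpha;\sum_{j=1}^np^H_{i,j}\delta_{V_j}+p^H_{i,n+1}\delta_{\bar v^*})$ and $v^*_{i2}:=Q(\tilde\alpha;\sum_{j=1}^np^H_{i,j}\delta_{V_j}+p^H_{i,n+1}\delta_0)$, either $\bar v^*=\infty$ or $$\text{(G2}^w\text{)}\qquad \sum_{i=1}^n\frac{w(X_i)}{\sum_{j=1}^{n+1}w(X_j)}\mathbb 1\{V_i\le v^*_{i1}\}\ge\alpha\quad\text{and}\quad \sum_{i=1}^n\frac{w(X_i)}{\sum_{j=1}^{n+1}w(X_j)}\mathbb 1\{V_i\le v^*_{i2}\}+\frac{w(X_{n+1})}{\sum_{j=1}^{n+1}w(X_j)}\ge\alpha.$$ Then $\mathbb P\{V_{n+1}\le Q(\tilde\alpha;\hat{\mathcal F})\}\ge\alpha$. In particular, with $\widehat C(X_{n+1})=\{y:V(X_{n+1},y)\le Q(\tilde\alpha;\hat{\mathcal F})\}$, $\mathbb P\{Y_{n+1}\in\widehat C(X_{n+1})\}\ge\alpha$.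
   Context: Covariate-shift assumptions: $Z_1,\ldots,Z_{n+1}$ are independent, $Z_i=(X_i,Y_i)\sim P=P_X\times P_{Y|X}$ for $i\le n$ and $Z_{n+1}\sim\tilde P=\tilde P_X\times P_{Y|X}$; $\tilde P_X$ is absolutely continuous with respect to $P_X$ with known density ratio $w=d\tilde P_X/dP_X$. $X=\{X_1,\ldots,X_{n+1}\}$ (unordered). A localizer is a function $H(x_1,x_2,X)\in[0,1]$ of $x_1,x_2\in\mathbb R^p$ and of the unordered set $X$, with $H(x,x,X)=1$; $H_{i,j}=H(X_i,X_j,X)$, $p^H_{i,j}=H_{i,j}/\sum_{k=1}^{n+1}H_{i,k}$. A fixed score function is a deterministic measurable $V:\mathbb R^p\times\mathbb R\to[0,\infty)$ not depending on the data; $V_i=V(Z_i)$. $\hat{\mathcal F}=\sum_{j=1}^{n}p^H_{n+1,j}\delta_{V_j}+p^H_{n+1,n+1}\delta_{\infty}$; $\delta_v$ is the point mass at $v$. For a probability distribution $\mathcal F$ on $\mathbb R\cup\{\infty\}$ and $a\in[0,1]$, $Q(a;\mathcal F)=\inf\{t:\mathbb P_{T\sim\mathcal F}(T\le t)\ge a\}$. *)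

theory Defs
  imports "HOL-Probability.Probability"
begin

text \<open>Quantile of a finitely supported distribution on the extended reals:
  the distribution puts mass p j at the point v j for j in I.
  Q(a; F) = inf { t : P_{T ~ F}(T <= t) >= a }.\<close>
definition Qf :: "real \<Rightarrow> 'i set \<Rightarrow> ('i \<Rightarrow> real) \<Rightarrow> ('i \<Rightarrow> ereal) \<Rightarrow> ereal" where
  "Qf a I p v = Inf {t. a \<le> (\<Sum>j\<in>{j\<in>I. v j \<le> t}. p j)}"

text \<open>Data are z : nat => (x, y), with Z_i = z i for i in {1..n+1}.\<close>

definition Xset :: "nat \<Rightarrow> (nat \<Rightarrow> 'x \<times> real) \<Rightarrow> 'x set" where
  "Xset n z = (\<lambda>i. fst (z i)) ` {1..n+1}"

definition Hm :: "('x \<Rightarrow> 'x \<Rightarrow> 'x set \<Rightarrow> real) \<Rightarrow> nat \<Rightarrow> (nat \<Rightarrow> 'x \<times> real) \<Rightarrow> nat \<Rightarrow> nat \<Rightarrow> real" where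
  "Hm H n z i j = H (fst (z i)) (fst (z j)) (Xset n z)"

definition pH :: "('x \<Rightarrow> 'x \<Rightarrow> 'x set \<Rightarrow> real) \<Rightarrow> nat \<Rightarrow> (nat \<Rightarrow> 'x \<times> real) \<Rightarrow> nat \<Rightarrow> nat \<Rightarrow> real" where
  "pH H n z i j = Hm H n z i j / (\<Sum>k\<in>{1..n+1}. Hm H n z i k)"

definition Vs :: "('x \<Rightarrow> real \<Rightarrow> real) \<Rightarrow> (nat \<Rightarrow> 'x \<times> real) \<Rightarrow> nat \<Rightarrow> real" where
  "Vs V z j = V (fst (z j)) (snd (z j))"

definition Qloc :: "('x \<Rightarrow> 'x \<Rightarrow> 'x set \<Rightarrow> real) \<Rightarrow> ('x \<Rightarrow> real \<Rightarrow> real) \<Rightarrow> nat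
    \<Rightarrow> (nat \<Rightarrow> 'x \<times> real) \<Rightarrow> real \<Rightarrow> nat \<Rightarrow> ereal \<Rightarrow> ereal" where
  "Qloc H V n z a i c = Qf a {1..n+1} (pH H n z i)
      (\<lambda>j. if j = n+1 then c else ereal (Vs V z j))"

text \<open>Q(a; hat F), hat F = sum_{j<=n} p^H_{n+1,j} delta_{V_j} + p^H_{n+1,n+1} delta_infinity.\<close>
definition Qhat :: "('x \<Rightarrow> 'x \<Rightarrow> 'x set \<Rightarrow> real) \<Rightarrow> ('x \<Rightarrow> real \<Rightarrow> real) \<Rightarrow> nat
    \<Rightarrow> (nat \<Rightarrow> 'x \<times> real) \<Rightarrow> real \<Rightarrow> ereal" where
  "Qhat H V n z a = Qloc H V n z a (n+1) \<infinity>"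

definition wt :: "('x \<Rightarrow> real) \<Rightarrow> nat \<Rightarrow> (nat \<Rightarrow> 'x \<times> real) \<Rightarrow> nat \<Rightarrow> real" where
  "wt w n z i = w (fst (z i)) / (\<Sum>j\<in>{1..n+1}. w (fst (z j)))"

definition G2w :: "('x \<Rightarrow> 'x \<Rightarrow> 'x set \<Rightarrow> real) \<Rightarrow> ('x \<Rightarrow> real \<Rightarrow> real) \<Rightarrow> ('x \<Rightarrow> real)
    \<Rightarrow> nat \<Rightarrow> real \<Rightarrow> (nat \<Rightarrow> 'x \<times> real) \<Rightarrow> real \<Rightarrow> bool" where
  "G2w H V w n \<alpha> z a =
     (let vbar = Qhat H V n z a in
      vbar = \<infinity> \<or>
      ((\<Sum>i\<in>{1..n}. wt w n z i * (if ereal (Vs V z i) \<le> Qloc H V n z a i vbar then 1 else 0)) \<ge> \<alpha>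
       \<and> (\<Sum>i\<in>{1..n}. wt w n z i * (if ereal (Vs V z i) \<le> Qloc H V n z a i 0 then 1 else 0))
           + wt w n z (n+1) \<ge> \<alpha>))"

definition Chat :: "('x \<Rightarrow> 'x \<Rightarrow> 'x set \<Rightarrow> real) \<Rightarrow> ('x \<Rightarrow> real \<Rightarrow> real) \<Rightarrow> nat
    \<Rightarrow> (nat \<Rightarrow> 'x \<times> real) \<Rightarrow> real \<Rightarrow> real set" where
  "Chat H V n z a = {y. ereal (V (fst (z (n+1))) y) \<le> Qhat H V n z a}"

end

theory Submission
  imports Defs
begin


definition sw :: "nat \<Rightarrow> nat \<Rightarrow> nat \<Rightarrow> nat" where
  "sw N k i = (if i = k then N else if i = N then k else i)"

lemma sw_sw[simp]: "sw N k (sw N k i) = i"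
  by (auto simp: sw_def)

lemma sw_in: "k \<in> {1..N} \<Longrightarrow> i \<in> {1..N} \<Longrightarrow> sw N k i \<in> {1..N}"
  by (auto simp: sw_def)

lemma sw_bij: "k \<in> {1..N} \<Longrightarrow> bij_betw (sw N k) {1..N} {1..N}"
  by (rule bij_betwI[where g="sw N k"]) (auto simp: sw_def)

lemma sw_image: "k \<in> {1..N} \<Longrightarrow> sw N k ` {1..N} = {1..N}"
  using sw_bij bij_betw_imp_surj_on by blast

lemma Qf_reindex:
  assumes "bij_betw s I I" "finite I"
  shows "Qf a I (p \<circ> s) (v \<circ> s) = Qf a I p v"
proof -
  have "(\<Sum>j\<in>{j\<in>I. (v \<circ> s) j \<le> t}. (p \<circ> s) j) = (\<Sum>j\<in>{j\<in>I. v j \<le> t}. p j)" for t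
  proof -
    have "(\<Sum>j\<in>{j\<in>I. (v \<circ> s) j \<le> t}. (p \<circ> s) j) = (\<Sum>j\<in>I. (\<lambda>j. if v j \<le> t then p j else 0) (s j))"
      using assms(2) by (simp add: sum.inter_filter)
    also have "\<dots> = (\<Sum>j\<in>I. (if v j \<le> t then p j else 0))"
      by (rule sum.reindex_bij_betw[OF assms(1), of "\<lambda>j. if v j \<le> t then p j else 0"])
    also have "\<dots> = (\<Sum>j\<in>{j\<in>I. v j \<le> t}. p j)"
      using assms(2) by (simp add: sum.inter_filter)
    finally show ?thesis .
  qed
  then show ?thesis unfolding Qf_def by simp
qed

lemma Qf_mono_v:
  assumes "finite I" "\<And>j. j \<in> I \<Longrightarrow> v j \<le> v' j" "\<And>j. j \<in> I \<Longrightarrow> 0 \<le> p j"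
  shows "Qf a I p v \<le> Qf a I p v'"
  unfolding Qf_def
proof (rule Inf_superset_mono, safe)
  fix t assume t: "a \<le> (\<Sum>j\<in>{j\<in>I. v' j \<le> t}. p j)"
  have "(\<Sum>j\<in>{j\<in>I. v' j \<le> t}. p j) \<le> (\<Sum>j\<in>{j\<in>I. v j \<le> t}. p j)"
    by (rule sum_mono2) (use assms in \<open>auto intro: order_trans\<close>)
  with t show "a \<le> (\<Sum>j\<in>{j\<in>I. v j \<le> t}. p j)" by simp
qed

lemma Qf_mono_a:
  assumes "a \<le> a'"
  shows "Qf a I p v \<le> Qf a' I p v"
  unfolding Qf_def by (rule Inf_superset_mono) (use assms in auto)

lemma Xset_sw:
  assumes "k \<in> {1..n+1}"
  shows "Xset n (z \<circ> sw (n+1) k) = Xset n z"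
proof -
  have "Xset n (z \<circ> sw (n+1) k) = (\<lambda>i. fst (z i)) ` (sw (n+1) k ` {1..n+1})"
    unfolding Xset_def by (simp add: image_comp o_def)
  also have "\<dots> = Xset n z" unfolding Xset_def using sw_image[OF assms] by simp
  finally show ?thesis .
qed

lemma Hm_sw:
  assumes "k \<in> {1..n+1}"
  shows "Hm H n (z \<circ> sw (n+1) k) i j = Hm H n z (sw (n+1) k i) (sw (n+1) k j)"
  unfolding Hm_def Xset_sw[OF assms] by simp

lemma pH_sw:
  assumes "k \<in> {1..n+1}"
  shows "pH H n (z \<circ> sw (n+1) k) i j = pH H n z (sw (n+1) k i) (sw (n+1) k j)"
proof -
  have "(\<Sum>k'\<in>{1..n+1}. Hm H n (z \<circ> sw (n+1) k) i k') = (\<Sum>k'\<in>{1..n+1}. Hm H n z (sw (n+1) k i) (sw (n+1) k k'))"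
    unfolding Hm_sw[OF assms] ..
  also have "\<dots> = (\<Sum>k'\<in>{1..n+1}. Hm H n z (sw (n+1) k i) k')"
    by (rule sum.reindex_bij_betw[OF sw_bij[OF assms], of "\<lambda>k'. Hm H n z (sw (n+1) k i) k'"])
  finally show ?thesis unfolding pH_def Hm_sw[OF assms] by simp
qed

lemma wsum_sw:
  assumes "k \<in> {1..n+1}"
  shows "(\<Sum>j\<in>{1..n+1}. w (fst (z (sw (n+1) k j)))) = (\<Sum>j\<in>{1..n+1}. w (fst (z j)))"
  using sum.reindex_bij_betw[OF sw_bij[OF assms], of "\<lambda>j. w (fst (z j))"] by simp

lemma wt_sw:
  assumes "k \<in> {1..n+1}"
  shows "wt w n (z \<circ> sw (n+1) k) i = wt w n z (sw (n+1) k i)"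
  unfolding wt_def o_apply wsum_sw[OF assms] by simp

lemma Qloc_sw:
  assumes "k \<in> {1..n+1}"
  shows "Qloc H V n (z \<circ> sw (n+1) k) a i c
     = Qf a {1..n+1} (pH H n z (sw (n+1) k i)) (\<lambda>j. if j = k then c else ereal (Vs V z j))"
proof -
  have e1: "pH H n (z \<circ> sw (n+1) k) i = pH H n z (sw (n+1) k i) \<circ> sw (n+1) k"
    unfolding fun_eq_iff o_apply pH_sw[OF assms] by simp
  have e2: "(\<lambda>j. if j = n+1 then c else ereal (Vs V (z \<circ> sw (n+1) k) j))
      = (\<lambda>j. if j = k then c else ereal (Vs V z j)) \<circ> sw (n+1) k"
    by (auto simp: fun_eq_iff sw_def Vs_def)
  show ?thesis unfolding Qloc_def e1 e2
    by (rule Qf_reindex[OF sw_bij[OF assms]]) simp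
qed

definition Tq where
  "Tq H V n z a i = Qf a {1..n+1} (pH H n z i) (\<lambda>j. ereal (Vs V z j))"

lemma pH_nonneg:
  assumes "\<And>x1 x2 X. 0 \<le> H x1 x2 X"
  shows "0 \<le> pH H n z i j"
proof -
  have "0 \<le> (\<Sum>k\<in>{1..n+1}. Hm H n z i k)" by (rule sum_nonneg) (simp add: Hm_def assms)
  then show ?thesis unfolding pH_def by (simp add: Hm_def assms)
qed

lemma Q_le_Tq:
  assumes "\<And>x1 x2 X. 0 \<le> H x1 x2 X" "c \<le> ereal (Vs V z k)"
  shows "Qf a {1..n+1} (pH H n z i) (\<lambda>j. if j = k then c else ereal (Vs V z j)) \<le> Tq H V n z a i"
  unfolding Tq_def by (rule Qf_mono_v) (use assms pH_nonneg[OF assms(1)] in auto)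

lemma Q_ge_Tq:
  assumes "\<And>x1 x2 X. 0 \<le> H x1 x2 X" "c \<ge> ereal (Vs V z k)"
  shows "Qf a {1..n+1} (pH H n z i) (\<lambda>j. if j = k then c else ereal (Vs V z j)) \<ge> Tq H V n z a i"
  unfolding Tq_def by (rule Qf_mono_v) (use assms pH_nonneg[OF assms(1)] in auto)

lemma Tq_mono: "a \<le> a' \<Longrightarrow> Tq H V n z a i \<le> Tq H V n z a' i"
  unfolding Tq_def by (rule Qf_mono_a)

lemma fail_props:
  fixes f :: "(nat \<Rightarrow> 'x \<times> real) \<Rightarrow> real"
  assumes Hn: "\<And>x1 x2 X. 0 \<le> H x1 x2 X"
    and wn: "\<And>x. 0 \<le> w x"
    and G: "G2w H V w n \<alpha> (z \<circ> sw (n+1) k) a"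
    and k: "k \<in> {1..n+1}"
    and fl: "\<not> ereal (Vs V (z \<circ> sw (n+1) k) (n+1)) \<le> Qhat H V n (z \<circ> sw (n+1) k) a"
  shows "\<not> ereal (Vs V z k) \<le> Tq H V n z a k"
    and "\<alpha> * (\<Sum>j\<in>{1..n+1}. w (fst (z j))) \<le> (\<Sum>j\<in>{j\<in>{1..n+1}. ereal (Vs V z j) \<le> Tq H V n z a j}. w (fst (z j)))"
proof -
  let ?s = "sw (n+1) k"
  let ?z = "z \<circ> ?s"
  define vb where "vb = Qhat H V n ?z a"
  have Vk: "Vs V ?z (n+1) = Vs V z k" by (simp add: Vs_def sw_def)
  have vbeq: "vb = Qf a {1..n+1} (pH H n z k) (\<lambda>j. if j = k then \<infinity> else ereal (Vs V z j))"
    unfolding vb_def Qhat_def Qloc_sw[OF k] by (simp add: sw_def)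
  have "Tq H V n z a k \<le> vb" unfolding vbeq by (rule Q_ge_Tq[OF Hn]) simp
  moreover have vlt: "vb < ereal (Vs V z k)" using fl unfolding vb_def Vk by simp
  ultimately show "\<not> ereal (Vs V z k) \<le> Tq H V n z a k" by simp
  define S where "S = (\<Sum>j\<in>{1..n+1}. w (fst (z j)))"
  have S0: "S \<ge> 0" unfolding S_def by (rule sum_nonneg) (simp add: wn)
  define C where "C = {j\<in>{1..n+1}. ereal (Vs V z j) \<le> Tq H V n z a j}"
  define g where "g j = (if j \<in> C then w (fst (z j)) else 0)" for j
  have vbinf: "vb \<noteq> \<infinity>" using vlt by auto
  from G vbinf have c1: "\<alpha> \<le> (\<Sum>i\<in>{1..n}. wt w n ?z i * (if ereal (Vs V ?z i) \<le> Qloc H V n ?z a i vb then 1 else 0))"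
    unfolding G2w_def Let_def vb_def by auto
  have tm: "wt w n ?z i * (if ereal (Vs V ?z i) \<le> Qloc H V n ?z a i vb then 1 else 0) \<le> g (?s i) / S"
    if i: "i \<in> {1..n}" for i
  proof (cases "ereal (Vs V ?z i) \<le> Qloc H V n ?z a i vb")
    case True
    have si: "?s i \<in> {1..n+1}" using sw_in[OF k, of i] i by auto
    have "Qloc H V n ?z a i vb \<le> Tq H V n z a (?s i)"
      unfolding Qloc_sw[OF k] by (rule Q_le_Tq[OF Hn]) (use vlt in simp)
    with True have "?s i \<in> C" unfolding C_def using si by (simp add: Vs_def)
    then show ?thesis using True unfolding wt_sw[OF k] by (simp add: wt_def g_def S_def)
  next
    case False
    have "0 \<le> g (?s i) / S" unfolding g_def using S0 wn by simp
    then show ?thesis using False by simp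
  qed
  have "\<alpha> \<le> (\<Sum>i\<in>{1..n}. g (?s i) / S)"
    using c1 sum_mono[OF tm] by (rule order_trans)
  also have "\<dots> \<le> (\<Sum>i\<in>{1..n+1}. g (?s i) / S)"
    by (rule sum_mono2) (auto simp: g_def S0 wn)
  also have "\<dots> = (\<Sum>i\<in>{1..n+1}. g i) / S"
    unfolding sum_divide_distrib[symmetric] sum.reindex_bij_betw[OF sw_bij[OF k], of g] ..
  also have "(\<Sum>i\<in>{1..n+1}. g i) = (\<Sum>j\<in>C. w (fst (z j)))"
  proof -
    have "(\<Sum>i\<in>{1..n+1}. g i) = (\<Sum>i\<in>{1..n+1}. if ereal (Vs V z i) \<le> Tq H V n z a i then w (fst (z i)) else 0)"
      by (rule sum.cong) (auto simp: g_def C_def)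
    also have "\<dots> = (\<Sum>j\<in>C. w (fst (z j)))"
      unfolding C_def by (rule sum.inter_filter[symmetric]) simp
    finally show ?thesis .
  qed
  finally have al: "\<alpha> \<le> (\<Sum>j\<in>C. w (fst (z j))) / S" .
  show "\<alpha> * (\<Sum>j\<in>{1..n+1}. w (fst (z j))) \<le> (\<Sum>j\<in>C. w (fst (z j)))"
  proof (cases "S = 0")
    case True
    have "0 \<le> (\<Sum>j\<in>C. w (fst (z j)))" by (rule sum_nonneg) (simp add: wn)
    then show ?thesis using True unfolding S_def by simp
  next
    case False
    with S0 have "S > 0" by simp
    with al show ?thesis unfolding S_def[symmetric] by (simp add: field_simps)
  qed
qed

lemma comb:
  fixes f :: "(nat \<Rightarrow> 'x \<times> real) \<Rightarrow> real"
  assumes Hn: "\<And>x1 x2 X. 0 \<le> H x1 x2 X"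
    and wn: "\<And>x. 0 \<le> w x"
    and G: "\<And>z. G2w H V w n \<alpha> z (f z)"
    and a1: "\<alpha> \<le> 1" and a0: "0 \<le> \<alpha>"
  shows "\<alpha> * (\<Sum>k\<in>{1..n+1}. w (fst (z k))) \<le> (\<Sum>k\<in>{1..n+1}. w (fst (z k)) *
     (if ereal (Vs V (z \<circ> sw (n+1) k) (n+1)) \<le> Qhat H V n (z \<circ> sw (n+1) k) (f (z \<circ> sw (n+1) k)) then 1 else 0))"
    (is "_ \<le> (\<Sum>k\<in>?I. w (fst (z k)) * (if ?ev k then 1 else 0))")
proof -
  define F where "F = {k\<in>?I. \<not> ?ev k}"
  define a where "a k = f (z \<circ> sw (n+1) k)" for k
  define S where "S = (\<Sum>j\<in>?I. w (fst (z j)))"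
  have S0: "S \<ge> 0" unfolding S_def by (rule sum_nonneg) (simp add: wn)
  have R: "(\<Sum>k\<in>?I. w (fst (z k)) * (if ?ev k then 1 else 0)) = (\<Sum>k\<in>?I - F. w (fst (z k)))"
  proof -
    have "(\<Sum>k\<in>?I. w (fst (z k)) * (if ?ev k then 1 else 0)) = (\<Sum>k\<in>?I. if ?ev k then w (fst (z k)) else 0)"
      by (rule sum.cong) auto
    also have "\<dots> = (\<Sum>k\<in>{k\<in>?I. ?ev k}. w (fst (z k)))"
      by (rule sum.inter_filter[symmetric]) simp
    also have "{k\<in>?I. ?ev k} = ?I - F" unfolding F_def by auto
    finally show ?thesis .
  qed
  show ?thesis
  proof (cases "F = {}")
    case True
    have "\<alpha> * S \<le> S" by (rule mult_left_le_one_le[OF S0 a0 a1])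
    then show ?thesis unfolding R True S_def by simp
  next
    case False
    have finF: "finite F" unfolding F_def by simp
    have "Min (a ` F) \<in> a ` F" using False finF by (intro Min_in) auto
    then obtain k0 where k0F: "k0 \<in> F" and k0m: "a k0 = Min (a ` F)" by auto
    have k0min: "a k0 \<le> a k" if "k \<in> F" for k
      unfolding k0m using finF that by (intro Min_le) auto
    have k0I: "k0 \<in> ?I" and fl0: "\<not> ?ev k0" using k0F unfolding F_def by auto
    define C where "C = {j\<in>?I. ereal (Vs V z j) \<le> Tq H V n z (a k0) j}"
    have "\<alpha> * S \<le> (\<Sum>j\<in>C. w (fst (z j)))"
      unfolding S_def C_def a_def
      by (rule fail_props(2)[OF Hn wn G[of "z \<circ> sw (n+1) k0"] k0I fl0])
    also have "\<dots> \<le> (\<Sum>k\<in>?I - F. w (fst (z k)))"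
    proof (rule sum_mono2)
      show "C \<subseteq> ?I - F"
      proof
        fix j assume jC: "j \<in> C"
        show "j \<in> ?I - F"
        proof (rule ccontr)
          assume "j \<notin> ?I - F"
          with jC have jF: "j \<in> F" unfolding C_def by auto
          have jI: "j \<in> ?I" and flj: "\<not> ?ev j" using jF unfolding F_def by auto
          have "\<not> ereal (Vs V z j) \<le> Tq H V n z (a j) j"
            unfolding a_def by (rule fail_props(1)[OF Hn wn G[of "z \<circ> sw (n+1) j"] jI flj])
          moreover have "Tq H V n z (a k0) j \<le> Tq H V n z (a j) j"
            by (rule Tq_mono[OF k0min[OF jF]])
          moreover have "ereal (Vs V z j) \<le> Tq H V n z (a k0) j" using jC unfolding C_def by auto
          ultimately show False by (meson order_trans)
        qed
      qed
    qed (auto simp: wn)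
    finally show ?thesis unfolding R S_def .
  qed
qed



lemma sw_meas:
  assumes k: "k \<in> {1..n+1}"
  shows "(\<lambda>z. z \<circ> sw (n+1) k) \<in> measurable (PiM {1..n+1} (\<lambda>_. P)) (PiM {1..n+1} (\<lambda>_. P))"
proof -
  have "(\<lambda>z i. z (sw (n+1) k i)) \<in> measurable (PiM {1..n+1} (\<lambda>_. P)) (PiM {1..n+1} (\<lambda>_. P))"
  proof (rule measurable_PiM_single')
    fix i assume "i \<in> {1..n+1}"
    then have "sw (n+1) k i \<in> {1..n+1}" using sw_in[OF k] by blast
    then show "(\<lambda>z. z (sw (n+1) k i)) \<in> measurable (PiM {1..n+1} (\<lambda>_. P)) P"
      by (rule measurable_component_singleton)
  next
    show "(\<lambda>z i. z (sw (n+1) k i)) \<in> space (PiM {1..n+1} (\<lambda>_. P)) \<rightarrow> (\<Pi>\<^sub>E i\<in>{1..n+1}. space P)"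
      using k by (auto simp: space_PiM PiE_def Pi_def extensional_def sw_def)
  qed
  then show ?thesis by (simp add: o_def)
qed

lemma swap_inv:
  assumes P: "prob_space P" and k: "k \<in> {1..n+1}"
  shows "distr (PiM {1..n+1} (\<lambda>_. P)) (PiM {1..n+1} (\<lambda>_. P)) (\<lambda>z. z \<circ> sw (n+1) k) = PiM {1..n+1} (\<lambda>_. P)"
proof -
  interpret P: prob_space P by fact
  interpret PP: product_sigma_finite "\<lambda>_. P" by standard
  let ?Q = "PiM {1..n+1} (\<lambda>_. P)"
  let ?s = "sw (n+1) k"
  show ?thesis
  proof (rule PP.PiM_eqI)
    show "finite {1..n+1}" by simp
    show "sets (distr ?Q ?Q (\<lambda>z. z \<circ> ?s)) = sets ?Q" by simp
  next
    fix A assume A: "\<And>i. i \<in> {1..n+1} \<Longrightarrow> A i \<in> sets P"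
    have As: "A (?s i) \<in> sets P" if "i \<in> {1..n+1}" for i using A sw_in[OF k that] by blast
    have pre: "(\<lambda>z. z \<circ> ?s) -` Pi\<^sub>E {1..n+1} A \<inter> space ?Q = Pi\<^sub>E {1..n+1} (\<lambda>i. A (?s i))"
    proof (intro set_eqI iffI)
      fix z assume z: "z \<in> (\<lambda>z. z \<circ> ?s) -` Pi\<^sub>E {1..n+1} A \<inter> space ?Q"
      show "z \<in> Pi\<^sub>E {1..n+1} (\<lambda>i. A (?s i))"
      proof (rule PiE_I)
        fix i assume i: "i \<in> {1..n+1}"
        have "?s i \<in> {1..n+1}" using sw_in[OF k i] .
        then have "(z \<circ> ?s) (?s i) \<in> A (?s i)" using z by (auto simp: PiE_def Pi_def)
        then show "z i \<in> A (?s i)" by simp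
      next
        fix i assume "i \<notin> {1..n+1}" then show "z i = undefined" using z by (auto simp: space_PiM PiE_def extensional_def)
      qed
    next
      fix z assume z: "z \<in> Pi\<^sub>E {1..n+1} (\<lambda>i. A (?s i))"
      have zs: "z \<in> space ?Q" using z As[THEN sets.sets_into_space] by (auto simp: space_PiM PiE_def Pi_def)
      have "z \<circ> ?s \<in> Pi\<^sub>E {1..n+1} A"
      proof (rule PiE_I)
        fix i assume i: "i \<in> {1..n+1}"
        have "?s i \<in> {1..n+1}" using sw_in[OF k i] .
        then have "z (?s i) \<in> A (?s (?s i))" using z by (auto simp: PiE_def Pi_def)
        then show "(z \<circ> ?s) i \<in> A i" by simp
      next
        fix i assume "i \<notin> {1..n+1}" then show "(z \<circ> ?s) i = undefined"
          using z k by (auto simp: PiE_def extensional_def sw_def)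
      qed
      with zs show "z \<in> (\<lambda>z. z \<circ> ?s) -` Pi\<^sub>E {1..n+1} A \<inter> space ?Q" by simp
    qed
    have "emeasure (distr ?Q ?Q (\<lambda>z. z \<circ> ?s)) (Pi\<^sub>E {1..n+1} A) = emeasure ?Q ((\<lambda>z. z \<circ> ?s) -` Pi\<^sub>E {1..n+1} A \<inter> space ?Q)"
      by (rule emeasure_distr[OF sw_meas[OF k]]) (use A in \<open>auto intro: sets_PiM_I_finite\<close>)
    also have "\<dots> = (\<Prod>i\<in>{1..n+1}. emeasure P (A (?s i)))"
      unfolding pre by (rule PP.emeasure_PiM) (use As in auto)
    also have "\<dots> = (\<Prod>i\<in>{1..n+1}. emeasure P (A i))"
      by (rule prod.reindex_bij_betw[OF sw_bij[OF k], of "\<lambda>i. emeasure P (A i)"])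
    finally show "emeasure (distr ?Q ?Q (\<lambda>z. z \<circ> ?s)) (Pi\<^sub>E {1..n+1} A) = (\<Prod>i\<in>{1..n+1}. emeasure P (A i))" .
  qed
qed

lemma nn_swap:
  assumes P: "prob_space P" and k: "k \<in> {1..n+1}"
    and f: "f \<in> borel_measurable (PiM {1..n+1} (\<lambda>_. P))"
  shows "(\<integral>\<^sup>+ z. f (z \<circ> sw (n+1) k) \<partial>PiM {1..n+1} (\<lambda>_. P)) = (\<integral>\<^sup>+ z. f z \<partial>PiM {1..n+1} (\<lambda>_. P))"
proof -
  have "(\<integral>\<^sup>+ z. f z \<partial>PiM {1..n+1} (\<lambda>_. P)) = (\<integral>\<^sup>+ z. f z \<partial>distr (PiM {1..n+1} (\<lambda>_. P)) (PiM {1..n+1} (\<lambda>_. P)) (\<lambda>z. z \<circ> sw (n+1) k))"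
    unfolding swap_inv[OF P k] ..
  also have "\<dots> = (\<integral>\<^sup>+ z. f (z \<circ> sw (n+1) k) \<partial>PiM {1..n+1} (\<lambda>_. P))"
    by (rule nn_integral_distr[OF sw_meas[OF k]]) (use f in simp)
  finally show ?thesis ..
qed

lemma M_density:
  fixes n :: nat
  assumes P: "prob_space P" and Pt: "prob_space Pt"
    and cov: "Pt = density P (\<lambda>x. ennreal (w (fst x)))"
    and wm: "(\<lambda>x. w (fst x)) \<in> borel_measurable P"
  shows "PiM {1..n+1} (\<lambda>i. if i = n+1 then Pt else P) = density (PiM {1..n+1} (\<lambda>_. P)) (\<lambda>z. ennreal (w (fst (z (n+1)))))"
proof -
  interpret P: prob_space P by fact
  interpret Pt: prob_space Pt by fact
  interpret PP: product_sigma_finite "\<lambda>_. P" by standard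
  let ?Mf = "\<lambda>i. if i = n+1 then Pt else P"
  interpret PM: product_sigma_finite ?Mf
    unfolding product_sigma_finite_def by (auto intro: P.sigma_finite_measure_axioms Pt.sigma_finite_measure_axioms)
  let ?Q = "PiM {1..n+1} (\<lambda>_. P)"
  have setsPt: "sets Pt = sets P" using cov by simp
  have gm: "(\<lambda>z. ennreal (w (fst (z (n+1))))) \<in> borel_measurable ?Q"
  proof -
    have "(\<lambda>z. w (fst (z (n+1)))) \<in> borel_measurable ?Q"
    proof (rule measurable_compose[OF _ wm])
      show "(\<lambda>z. z (n+1)) \<in> measurable ?Q P"
        by (rule measurable_component_singleton[where M="\<lambda>_. P", simplified]) simp
    qed
    then show ?thesis by simp
  qed
  show ?thesis
  proof (rule PM.PiM_eqI[symmetric])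
    show "finite {1..n+1}" by simp
    show "sets (density ?Q (\<lambda>z. ennreal (w (fst (z (n+1)))))) = sets (PiM {1..n+1} ?Mf)"
      by (simp, rule sets_PiM_cong) (auto simp: setsPt)
  next
    fix A assume A: "\<And>i. i \<in> {1..n+1} \<Longrightarrow> A i \<in> sets (?Mf i)"
    have AP: "A i \<in> sets P" if "i \<in> {1..n+1}" for i using A[OF that] setsPt by (auto split: if_splits)
    define h where "h i x = (if i = n+1 then ennreal (w (fst x)) else 1) * indicator (A i) x" for i x
    have hm: "h i \<in> borel_measurable P" if "i \<in> {1..n+1}" for i
      unfolding h_def using wm AP[OF that] by auto
    have box: "Pi\<^sub>E {1..n+1} A \<in> sets ?Q" using AP by (auto intro: sets_PiM_I_finite)
    have "emeasure (density ?Q (\<lambda>z. ennreal (w (fst (z (n+1)))))) (Pi\<^sub>E {1..n+1} A)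
        = (\<integral>\<^sup>+ z. ennreal (w (fst (z (n+1)))) * indicator (Pi\<^sub>E {1..n+1} A) z \<partial>?Q)"
      by (rule emeasure_density[OF gm box])
    also have "\<dots> = (\<integral>\<^sup>+ z. (\<Prod>i\<in>{1..n+1}. h i (z i)) \<partial>?Q)"
    proof (rule nn_integral_cong)
      fix z assume z: "z \<in> space ?Q"
      have "(\<Prod>i\<in>{1..n+1}. h i (z i)) = (\<Prod>i\<in>{1..n+1}. (if i = n+1 then ennreal (w (fst (z i))) else 1)) * (\<Prod>i\<in>{1..n+1}. indicator (A i) (z i))"
        unfolding h_def by (rule prod.distrib)
      also have "(\<Prod>i\<in>{1..n+1}. (if i = n+1 then ennreal (w (fst (z i))) else 1)) = ennreal (w (fst (z (n+1))))"
        by (subst prod.delta) auto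
      also have "(\<Prod>i\<in>{1..n+1}. indicator (A i) (z i)) = (indicator (Pi\<^sub>E {1..n+1} A) z :: ennreal)"
      proof (cases "z \<in> Pi\<^sub>E {1..n+1} A")
        case True then show ?thesis by (auto simp: PiE_def Pi_def intro!: prod.neutral)
      next
        case False
        have "\<exists>i\<in>{1..n+1}. z i \<notin> A i"
        proof (rule ccontr)
          assume "\<not> ?thesis"
          then have "z \<in> Pi\<^sub>E {1..n+1} A" using z by (auto simp: space_PiM PiE_def Pi_def)
          with False show False by simp
        qed
        then obtain i where i: "i \<in> {1..n+1}" "z i \<notin> A i" by blast
        then have "(\<Prod>i\<in>{1..n+1}. indicator (A i) (z i) :: ennreal) = 0"
          by (intro prod_zero) (auto intro!: bexI[of _ i])
        with False show ?thesis by simp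
      qed
      finally show "ennreal (w (fst (z (n+1)))) * indicator (Pi\<^sub>E {1..n+1} A) z = (\<Prod>i\<in>{1..n+1}. h i (z i))" by simp
    qed
    also have "\<dots> = (\<Prod>i\<in>{1..n+1}. integral\<^sup>N P (h i))"
      by (rule PP.product_nn_integral_prod) (use hm in auto)
    also have "\<dots> = (\<Prod>i\<in>{1..n+1}. emeasure (?Mf i) (A i))"
    proof (rule prod.cong)
      fix i assume i: "i \<in> {1..n+1}"
      show "integral\<^sup>N P (h i) = emeasure (?Mf i) (A i)"
      proof (cases "i = n+1")
        case True
        then have "integral\<^sup>N P (h i) = (\<integral>\<^sup>+ x. ennreal (w (fst x)) * indicator (A i) x \<partial>P)" unfolding h_def by simp
        also have "\<dots> = emeasure Pt (A i)" unfolding cov by (rule emeasure_density[symmetric]) (use wm AP[OF i] in auto)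
        finally show ?thesis using True by simp
      next
        case False
        then show ?thesis unfolding h_def using AP[OF i] by simp
      qed
    qed simp
    finally show "emeasure (density ?Q (\<lambda>z. ennreal (w (fst (z (n+1)))))) (Pi\<^sub>E {1..n+1} A) = (\<Prod>i\<in>{1..n+1}. emeasure (?Mf i) (A i))" .
  qed
qed



theorem theorem7:
  fixes n :: nat
    and P Pt :: "((real ^ 'p) \<times> real) measure"
    and w :: "real ^ 'p \<Rightarrow> real"
    and H :: "real ^ 'p \<Rightarrow> real ^ 'p \<Rightarrow> (real ^ 'p) set \<Rightarrow> real"
    and V :: "real ^ 'p \<Rightarrow> real \<Rightarrow> real"
    and A :: "(nat \<Rightarrow> (real ^ 'p) \<times> real) \<Rightarrow> real ^ 'p \<Rightarrow> real"
    and \<alpha> :: real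
  defines "M \<equiv> PiM {1..n+1} (\<lambda>i. if i = n+1 then Pt else P)"
    and "\<alpha>t \<equiv> (\<lambda>z. A (restrict z {1..n}) (fst (z (n+1))))"
  assumes P_prob: "prob_space P"
    and P_sets: "sets P = sets borel"
    and w_meas: "w \<in> borel_measurable borel"
    and w_nonneg: "\<And>x. w x \<ge> 0"
    and covshift: "Pt = density P (\<lambda>z. ennreal (w (fst z)))"
    and Pt_prob: "prob_space Pt"
    and H_range: "\<And>x1 x2 X. 0 \<le> H x1 x2 X \<and> H x1 x2 X \<le> 1"
    and H_diag: "\<And>x X. H x x X = 1"
    and V_meas: "(\<lambda>z. V (fst z) (snd z)) \<in> borel_measurable borel"
    and V_nonneg: "\<And>x y. V x y \<ge> 0"
    and alpha: "0 < \<alpha>" "\<alpha> < 1"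
    and A_range: "\<And>z x. 0 \<le> A z x \<and> A z x \<le> 1"
    and A_perm: "\<And>\<sigma> z x. \<sigma> permutes {1..n} \<Longrightarrow> A (z \<circ> \<sigma>) x = A z x"
    and A_G2w: "\<And>z. G2w H V w n \<alpha> z (\<alpha>t z)"
    and event_meas: "{z \<in> space M. ereal (V (fst (z (n+1))) (snd (z (n+1)))) \<le> Qhat H V n z (\<alpha>t z)} \<in> sets M"
  shows "\<alpha> \<le> measure M {z \<in> space M. ereal (V (fst (z (n+1))) (snd (z (n+1)))) \<le> Qhat H V n z (\<alpha>t z)}
       \<and> \<alpha> \<le> measure M {z \<in> space M. snd (z (n+1)) \<in> Chat H V n z (\<alpha>t z)}"
  proof -
  let ?I = "{1..n+1}"
  let ?Q = "PiM {1..n+1} (\<lambda>_. P)"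
  let ?g = "\<lambda>z. ennreal (w (fst (z (n+1))))"
  define Ev where "Ev z \<longleftrightarrow> ereal (V (fst (z (n+1))) (snd (z (n+1)))) \<le> Qhat H V n z (\<alpha>t z)" for z
  define E where "E = {z \<in> space M. Ev z}"
  interpret P: prob_space P by (rule P_prob)
  have wm: "(\<lambda>x. w (fst x)) \<in> borel_measurable P"
  proof -
    have "(\<lambda>x::(real ^ 'p) \<times> real. w (fst x)) \<in> borel_measurable (borel \<Otimes>\<^sub>M borel)"
      by (rule measurable_compose[OF measurable_fst w_meas])
    then have "(\<lambda>x::(real ^ 'p) \<times> real. w (fst x)) \<in> borel_measurable borel" by (simp add: borel_prod)
    then show ?thesis using measurable_cong_sets[OF P_sets refl] by blast
  qed
  have Md: "M = density ?Q ?g"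
    unfolding M_def by (rule M_density[OF P_prob Pt_prob covshift wm])
  have Mprob: "prob_space M" unfolding M_def
    by (rule prob_space_PiM) (use P_prob Pt_prob in auto)
  interpret MP: prob_space M by (rule Mprob)
  have spM: "space M = space ?Q" unfolding Md by simp
  have EM: "E \<in> sets M" using event_meas unfolding E_def Ev_def by simp
  have EQ: "E \<in> sets ?Q" using EM unfolding Md by simp
  have gm: "?g \<in> borel_measurable ?Q"
  proof -
    have "(\<lambda>z. w (fst (z (n+1)))) \<in> borel_measurable ?Q"
    proof (rule measurable_compose[OF _ wm])
      show "(\<lambda>z. z (n+1)) \<in> measurable ?Q P"
        by (rule measurable_component_singleton[where M="\<lambda>_. P", simplified]) simp
    qed
    then show ?thesis by simp
  qed
  have wkm: "(\<lambda>z. ennreal (w (fst (z k)))) \<in> borel_measurable ?Q" if k: "k \<in> ?I" for k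
  proof -
    have "(\<lambda>z. w (fst (z k))) \<in> borel_measurable ?Q"
    proof (rule measurable_compose[OF _ wm])
      show "(\<lambda>z. z k) \<in> measurable ?Q P"
        by (rule measurable_component_singleton[where M="\<lambda>_. P", simplified]) (use k in simp)
    qed
    then show ?thesis by simp
  qed
  have hm: "(\<lambda>z. ennreal (w (fst (z k))) * indicator E (z \<circ> sw (n+1) k)) \<in> borel_measurable ?Q"
    if k: "k \<in> ?I" for k
  proof -
    have "(\<lambda>z. indicator E (z \<circ> sw (n+1) k) :: ennreal) \<in> borel_measurable ?Q"
      by (rule measurable_compose[OF sw_meas[OF k] borel_measurable_indicator[OF EQ]])
    then show ?thesis using wkm[OF k] by simp
  qed
  have gE: "(\<lambda>z. ?g z * indicator E z) \<in> borel_measurable ?Q"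
    using gm EQ by simp
  have eME: "emeasure M E = (\<integral>\<^sup>+ z. ?g z * indicator E z \<partial>?Q)"
    unfolding Md by (rule emeasure_density[OF gm EQ])
  have swE: "emeasure M E = (\<integral>\<^sup>+ z. ennreal (w (fst (z k))) * indicator E (z \<circ> sw (n+1) k) \<partial>?Q)"
    if k: "k \<in> ?I" for k
  proof -
    have "emeasure M E = (\<integral>\<^sup>+ z. ?g (z \<circ> sw (n+1) k) * indicator E (z \<circ> sw (n+1) k) \<partial>?Q)"
      unfolding eME by (rule nn_swap[OF P_prob k gE, symmetric])
    also have "\<dots> = (\<integral>\<^sup>+ z. ennreal (w (fst (z k))) * indicator E (z \<circ> sw (n+1) k) \<partial>?Q)"
      by (simp add: sw_def)
    finally show ?thesis .
  qed
  have one: "(\<integral>\<^sup>+ z. ennreal (w (fst (z k))) \<partial>?Q) = 1" if k: "k \<in> ?I" for k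
  proof -
    have "(\<integral>\<^sup>+ z. ennreal (w (fst (z k))) \<partial>?Q) = (\<integral>\<^sup>+ z. ?g (z \<circ> sw (n+1) k) \<partial>?Q)"
      by (simp add: sw_def)
    also have "\<dots> = (\<integral>\<^sup>+ z. ?g z \<partial>?Q)" by (rule nn_swap[OF P_prob k gm])
    also have "\<dots> = (\<integral>\<^sup>+ z. ?g z * indicator (space ?Q) z \<partial>?Q)"
      by (rule nn_integral_cong) simp
    also have "\<dots> = emeasure M (space M)"
      unfolding spM unfolding Md by (rule emeasure_density[symmetric, OF gm]) simp
    also have "\<dots> = 1" by (rule MP.emeasure_space_1)
    finally show ?thesis .
  qed
  have pw: "(\<Sum>k\<in>?I. ennreal \<alpha> * ennreal (w (fst (z k)))) \<le> (\<Sum>k\<in>?I. ennreal (w (fst (z k))) * indicator E (z \<circ> sw (n+1) k))"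
    if z: "z \<in> space ?Q" for z
  proof -
    have ind: "indicator E (z \<circ> sw (n+1) k) = (if Ev (z \<circ> sw (n+1) k) then 1 else (0::ennreal))"
      if k: "k \<in> ?I" for k
    proof -
      have "z \<circ> sw (n+1) k \<in> space M"
        unfolding spM using measurable_space[OF sw_meas[OF k] z] .
      then show ?thesis unfolding E_def by simp
    qed
    have "(\<Sum>k\<in>?I. ennreal \<alpha> * ennreal (w (fst (z k)))) = (\<Sum>k\<in>?I. ennreal (\<alpha> * w (fst (z k))))"
      by (rule sum.cong) (use alpha w_nonneg in \<open>auto simp: ennreal_mult\<close>)
    also have "\<dots> = ennreal (\<Sum>k\<in>?I. \<alpha> * w (fst (z k)))"
      by (rule sum_ennreal) (use alpha w_nonneg in auto)
    also have "\<dots> \<le> ennreal (\<Sum>k\<in>?I. w (fst (z k)) * (if Ev (z \<circ> sw (n+1) k) then 1 else 0))"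
    proof (rule ennreal_leI)
      have "\<alpha> * (\<Sum>k\<in>?I. w (fst (z k))) \<le> (\<Sum>k\<in>?I. w (fst (z k)) *
         (if ereal (Vs V (z \<circ> sw (n+1) k) (n+1)) \<le> Qhat H V n (z \<circ> sw (n+1) k) (\<alpha>t (z \<circ> sw (n+1) k)) then 1 else 0))"
        by (rule comb[OF _ w_nonneg A_G2w]) (use H_range alpha in auto)
      then show "(\<Sum>k\<in>?I. \<alpha> * w (fst (z k))) \<le> (\<Sum>k\<in>?I. w (fst (z k)) * (if Ev (z \<circ> sw (n+1) k) then 1 else 0))"
        unfolding Ev_def Vs_def sum_distrib_left[symmetric] .
    qed
    also have "\<dots> = (\<Sum>k\<in>?I. ennreal (w (fst (z k)) * (if Ev (z \<circ> sw (n+1) k) then 1 else 0)))"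
      by (rule sum_ennreal[symmetric]) (use w_nonneg in auto)
    also have "\<dots> = (\<Sum>k\<in>?I. ennreal (w (fst (z k))) * indicator E (z \<circ> sw (n+1) k))"
    proof (rule sum.cong)
      fix k assume k: "k \<in> ?I"
      show "ennreal (w (fst (z k)) * (if Ev (z \<circ> sw (n+1) k) then 1 else 0)) = ennreal (w (fst (z k))) * indicator E (z \<circ> sw (n+1) k)"
        unfolding ind[OF k] by simp
    qed simp
    finally show ?thesis .
  qed
  have "of_nat (n+1) * ennreal \<alpha> = (\<Sum>k\<in>?I. ennreal \<alpha> * (\<integral>\<^sup>+ z. ennreal (w (fst (z k))) \<partial>?Q))"
  proof -
    have "(\<Sum>k\<in>?I. ennreal \<alpha> * (\<integral>\<^sup>+ z. ennreal (w (fst (z k))) \<partial>?Q)) = (\<Sum>k\<in>?I. ennreal \<alpha>)"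
    proof (rule sum.cong)
      fix k assume k: "k \<in> ?I"
      show "ennreal \<alpha> * (\<integral>\<^sup>+ z. ennreal (w (fst (z k))) \<partial>?Q) = ennreal \<alpha>" unfolding one[OF k] by simp
    qed simp
    then show ?thesis by simp
  qed
  also have "\<dots> = (\<Sum>k\<in>?I. (\<integral>\<^sup>+ z. ennreal \<alpha> * ennreal (w (fst (z k))) \<partial>?Q))"
  proof (rule sum.cong)
    fix k assume k: "k \<in> ?I"
    show "ennreal \<alpha> * (\<integral>\<^sup>+ z. ennreal (w (fst (z k))) \<partial>?Q) = (\<integral>\<^sup>+ z. ennreal \<alpha> * ennreal (w (fst (z k))) \<partial>?Q)"
      by (rule nn_integral_cmult[symmetric, OF wkm[OF k]])
  qed simp
  also have "\<dots> = (\<integral>\<^sup>+ z. (\<Sum>k\<in>?I. ennreal \<alpha> * ennreal (w (fst (z k)))) \<partial>?Q)"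
    by (rule nn_integral_sum[symmetric]) (use wkm in simp)
  also have "\<dots> \<le> (\<integral>\<^sup>+ z. (\<Sum>k\<in>?I. ennreal (w (fst (z k))) * indicator E (z \<circ> sw (n+1) k)) \<partial>?Q)"
    by (rule nn_integral_mono) (rule pw)
  also have "\<dots> = (\<Sum>k\<in>?I. (\<integral>\<^sup>+ z. ennreal (w (fst (z k))) * indicator E (z \<circ> sw (n+1) k) \<partial>?Q))"
    by (rule nn_integral_sum) (rule hm)
  also have "\<dots> = (\<Sum>k\<in>?I. emeasure M E)"
  proof (rule sum.cong)
    fix k assume k: "k \<in> ?I"
    show "(\<integral>\<^sup>+ z. ennreal (w (fst (z k))) * indicator E (z \<circ> sw (n+1) k) \<partial>?Q) = emeasure M E"
      by (rule swE[OF k, symmetric])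
  qed simp
  also have "\<dots> = of_nat (n+1) * emeasure M E" by simp
  finally have ineq: "of_nat (n+1) * ennreal \<alpha> \<le> of_nat (n+1) * emeasure M E" .
  have key: "\<alpha> \<le> measure M E"
  proof -
    have "ennreal (real (n+1) * \<alpha>) \<le> ennreal (real (n+1) * measure M E)"
      using ineq unfolding MP.emeasure_eq_measure
      by (simp add: ennreal_mult ennreal_of_nat_eq_real_of_nat alpha less_imp_le del: of_nat_Suc)
    then have "real (n+1) * \<alpha> \<le> real (n+1) * measure M E"
      by (subst (asm) ennreal_le_iff) auto
    then show ?thesis by simp
  qed
  have CE: "{z \<in> space M. snd (z (n+1)) \<in> Chat H V n z (\<alpha>t z)} = E"
    unfolding E_def Ev_def Chat_def by simp
  show ?thesis using key unfolding CE unfolding E_def Ev_def by simp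
qed

end
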